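(* Fix integers $L \ge 1$ and $K \ge 1$. Consider the following statistical model with parameters $\pi \in \Delta^{L-1}$, $\pi' \in \Delta^{L-1}$ and a matrix $\varphi = (\varphi_{lk})_{l \in \{1,\dots,L\}, k \in \{1,\dots,K\}}$ whose rows $\varphi_{l:} = (\varphi_{lk})_{k=1}^K$ lie in $\Delta^{K-1}$, where $\Delta^{m-1} = \{y \in (0,1)^m : y_1 + \dots + y_m = 1\}$ denotes the open probability simplex. Given the parameters, independently: $Y_i \sim \mathrm{Categorical}(L, \pi)$ and $C_i \mid Y_i = y_i \sim \mathrm{Categorical}(K, \varphi_{y_i:})$ for $i = 1, \dots, N$; $Y'_j \sim \mathrm{Categorical}(L, \pi')$ and $C'_j \mid Y'_j = y'_j \sim \mathrm{Categorical}(K, \varphi_{y'_j:})$ for $j = 1, \dots, N'$. The observed data are the pairs $(Y_i, C_i)_{i=1}^N$ and the values $(C'_j)_{j=1}^{N'}$ (the $Y'_j$ are unobserved). Let $P(\pi, \pi', \varphi)$ be a prior density on the parameter space that is continuous and strictly positive on the whole parameter space, and let the maximum a posteriori estimate $(\hat\pi, \hat\pi', \hat\varphi)$ be a maximizer of the posterior density $P(\pi, \pi', \varphi \mid \{(Y_i, C_i)\}, \{C'_j\})$. Assume the model is not misspecified, i.e., the data are generated by this model with true parameters $\pi^*, \pi'^*, \varphi^*$, where $\pi^*, \pi'^* \in \Delta^{L-1}$ and every row $\varphi^*_{l:} \in \Delta^{K-1}$ (open simplices), and assume that the $K \times L$ matrix $(\varphi^* )^T$ (whose $(k,l)$ entry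 is $P(C = k \mid Y = l)$) has full rank $L$. Then for every $\delta > 0$ and $\varepsilon > 0$ there exist $N$ and $N'$ large enough that, with probability at least $1 - \delta$, the maximum a posteriori estimate $(\hat\pi, \hat\pi', \hat\varphi)$ lies in the $\varepsilon$-neighborhood of the true parameter values $(\pi^*, \pi'^*, \varphi^* )$.
   Context: This is a model for quantification under prior probability shift: $Y$ is a class label in $\{1,\dots,L\}$, $C = f(X)$ is the output in $\{1,\dots,K\}$ of a fixed black-box mapping applied to features, the labeled population has label prevalence $\pi$, the unlabeled population has label prevalence $\pi'$, and both share the same conditional distribution $P(C = k \mid Y = l) = \varphi_{lk}$. *)

theory Defs
  imports "HOL-Analysis.Analysis" "HOL-Probability.Probability"
begin

text \<open>Labels Y range over the finite type 'l (L = CARD('l)), black-box outputs C over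
  the finite type 'k (K = CARD('k)). A parameter is a triple (pi, pi', phi) with
  pi, pi' :: real^'l and phi :: real^'k^'l, row l being phi$l, phi$l$k = P(C = k | Y = l).\<close>

type_synonym ('l, 'k) param = "(real^'l) \<times> (real^'l) \<times> (real^'k^'l)"

definition open_simplex :: "(real^'n::finite) set" where
  "open_simplex = {y. (\<forall>i. 0 < y$i \<and> y$i < 1) \<and> (\<Sum>i\<in>UNIV. y$i) = 1}"

definition param_space :: "('l::finite, 'k::finite) param set" where
  "param_space = {(p, p', f). p \<in> open_simplex \<and> p' \<in> open_simplex \<and> (\<forall>l. f$l \<in> open_simplex)}"

definition categorical :: "real^'n::finite \<Rightarrow> 'n pmf" where
  "categorical p = embed_pmf (\<lambda>i. p$i)"

definition joint_pmf :: "real^'l::finite \<Rightarrow> real^'k::finite^'l \<Rightarrow> ('l \<times> 'k) pmf" where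
  "joint_pmf p f = bind_pmf (categorical p) (\<lambda>y. map_pmf (\<lambda>c. (y, c)) (categorical (f$y)))"

definition data_pmf :: "nat \<Rightarrow> nat \<Rightarrow> ('l::finite, 'k::finite) param
    \<Rightarrow> ((nat \<Rightarrow> 'l \<times> 'k) \<times> (nat \<Rightarrow> 'k)) pmf" where
  "data_pmf N N' \<theta> = (case \<theta> of (p, p', f) \<Rightarrow>
     pair_pmf (Pi_pmf {..<N} undefined (\<lambda>_. joint_pmf p f))
              (Pi_pmf {..<N'} undefined (\<lambda>_. map_pmf snd (joint_pmf p' f))))"

definition likelihood :: "nat \<Rightarrow> nat \<Rightarrow> (nat \<Rightarrow> 'l \<times> 'k) \<Rightarrow> (nat \<Rightarrow> 'k)
    \<Rightarrow> ('l::finite, 'k::finite) param \<Rightarrow> real" where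
  "likelihood N N' yc c' \<theta> = (case \<theta> of (p, p', f) \<Rightarrow>
     (\<Prod>i<N. p$(fst (yc i)) * f$(fst (yc i))$(snd (yc i))) *
     (\<Prod>j<N'. \<Sum>l\<in>UNIV. p'$l * f$l$(c' j)))"

text \<open>MAP estimate: a maximiser over the parameter space of the posterior density,
  which is prior * likelihood divided by a data-dependent positive normalising
  constant; hence the maximisers are those of prior * likelihood.\<close>
definition is_MAP :: "(('l::finite, 'k::finite) param \<Rightarrow> real) \<Rightarrow> nat \<Rightarrow> nat
    \<Rightarrow> (nat \<Rightarrow> 'l \<times> 'k) \<Rightarrow> (nat \<Rightarrow> 'k) \<Rightarrow> ('l, 'k) param \<Rightarrow> bool" where
  "is_MAP prior N N' yc c' \<theta> \<longleftrightarrow> \<theta> \<in> param_space \<and>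
     (\<forall>\<theta>'\<in>param_space. prior \<theta>' * likelihood N N' yc c' \<theta>' \<le> prior \<theta> * likelihood N N' yc c' \<theta>)"

end

theory Submission
  imports Defs
begin

lemma pmf_categorical:
  assumes "p \<in> open_simplex"
  shows "pmf (categorical p) i = p$i"
proof -
  have nn: "\<forall>x. 0 \<le> p$x" using assms by (auto simp: open_simplex_def less_imp_le)
  have "(\<integral>\<^sup>+x. ennreal (p$x) \<partial>count_space UNIV) = ennreal (\<Sum>x\<in>UNIV. p$x)"
    by (simp add: nn_integral_count_space_finite nn sum_ennreal)
  also have "\<dots> = 1" using assms by (simp add: open_simplex_def)
  finally show ?thesis unfolding categorical_def
    by (subst pmf_embed_pmf) (use nn in auto)
qed

lemma pmf_joint:
  assumes "p \<in> open_simplex" "\<forall>l. f$l \<in> open_simplex"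
  shows "pmf (joint_pmf p f) (l,k) = p$l * f$l$k"
proof -
  have "pmf (joint_pmf p f) (l,k) = measure_pmf.expectation (categorical p)
         (\<lambda>y. pmf (map_pmf (\<lambda>c. (y, c)) (categorical (f$y))) (l,k))"
    unfolding joint_pmf_def by (simp add: pmf_bind)
  also have "\<dots> = measure_pmf.expectation (categorical p) (\<lambda>y. if y = l then f$l$k else 0)"
  proof (intro Bochner_Integration.integral_cong refl)
    fix y
    show "pmf (map_pmf (\<lambda>c. (y, c)) (categorical (f$y))) (l,k) = (if y = l then f$l$k else 0)"
    proof (cases "y = l")
      case True
      have "pmf (map_pmf (\<lambda>c. (y, c)) (categorical (f$y))) (y,k) = pmf (categorical (f$y)) k"
        by (rule pmf_map_inj') (auto simp: inj_on_def)
      then show ?thesis using True assms(2) pmf_categorical[of "f$l" k] by simp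
    next
      case False
      then show ?thesis by (auto simp: pmf_eq_0_set_pmf)
    qed
  qed
  also have "\<dots> = (\<Sum>y\<in>UNIV. (if y = l then f$l$k else 0) * pmf (categorical p) y)"
    by (rule integral_measure_pmf_real) auto
  also have "\<dots> = (\<Sum>y\<in>UNIV. (if y = l then f$l$k * pmf (categorical p) l else 0))"
    by (intro sum.cong) auto
  also have "\<dots> = p$l * f$l$k" using pmf_categorical[OF assms(1)] by simp
  finally show ?thesis .
qed

lemma pmf_marg:
  assumes "p \<in> open_simplex" "\<forall>l. f$l \<in> open_simplex"
  shows "pmf (map_pmf snd (joint_pmf p f)) k = (\<Sum>l\<in>UNIV. p$l * f$l$k)"
proof -
  have "pmf (map_pmf snd (joint_pmf p f)) k = measure_pmf.prob (joint_pmf p f) (snd -` {k})"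
    by (simp add: pmf_map)
  also have "snd -` {k} = UNIV \<times> {k}" by auto
  also have "measure_pmf.prob (joint_pmf p f) (UNIV \<times> {k}) = (\<Sum>x\<in>UNIV \<times> {k}. pmf (joint_pmf p f) x)"
    by (simp add: measure_measure_pmf_finite)
  also have "\<dots> = (\<Sum>l\<in>UNIV. pmf (joint_pmf p f) (l,k))"
    by (rule sum.reindex_bij_witness[where i="\<lambda>l. (l,k)" and j=fst]) auto
  finally show ?thesis using pmf_joint[OF assms] by simp
qed

lemma count_binomial:
  "map_pmf (\<lambda>v. card {i\<in>{..<N}. v i = c}) (Pi_pmf {..<N} dflt (\<lambda>_. D))
     = binomial_pmf N (pmf D c)"
proof -
  have b: "map_pmf (\<lambda>x. x = c) D = bernoulli_pmf (pmf D c)"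
  proof (rule pmf_eqI)
    fix b :: bool
    show "pmf (map_pmf (\<lambda>x. x = c) D) b = pmf (bernoulli_pmf (pmf D c)) b"
    proof (cases b)
      case True
      have "pmf (map_pmf (\<lambda>x. x = c) D) True = measure_pmf.prob D {c}"
        by (simp add: pmf_map vimage_def)
      then show ?thesis using True by (simp add: measure_pmf_single pmf_le_1)
    next
      case False
      have "pmf (map_pmf (\<lambda>x. x = c) D) False = measure_pmf.prob D (UNIV - {c})"
        by (simp add: pmf_map vimage_def Compl_eq_Diff_UNIV[symmetric] Collect_neg_eq)
      also have "\<dots> = 1 - pmf D c"
        using measure_pmf.prob_compl[of "{c}" D] by (simp add: measure_pmf_single Compl_eq_Diff_UNIV)
      finally show ?thesis using False by (simp add: pmf_le_1)
    qed
  qed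
  have "binomial_pmf N (pmf D c) =
     map_pmf (\<lambda>f. card {x\<in>{..<N}. f x}) (Pi_pmf {..<N} (dflt = c) (\<lambda>_. bernoulli_pmf (pmf D c)))"
    by (rule binomial_pmf_altdef') (auto simp: pmf_le_1)
  also have "Pi_pmf {..<N} (dflt = c) (\<lambda>_. bernoulli_pmf (pmf D c))
      = Pi_pmf {..<N} (dflt = c) (\<lambda>_. map_pmf (\<lambda>x. x = c) D)" by (simp add: b)
  also have "\<dots> = map_pmf (\<lambda>h. (\<lambda>x. x = c) \<circ> h) (Pi_pmf {..<N} dflt (\<lambda>_. D))"
    by (rule Pi_pmf_map) auto
  finally show ?thesis by (simp add: map_pmf_comp o_def)
qed

lemma count_tail:
  fixes N :: nat
  assumes "N > 0" "s \<ge> 0"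
  shows "measure_pmf.prob (Pi_pmf {..<N} dflt (\<lambda>_. D))
           {v. \<bar>real (card {i\<in>{..<N}. v i = c}) - N * pmf D c\<bar> \<ge> s * sqrt N} \<le> 2 * exp (-2 * s\<^sup>2)"
proof -
  interpret binomial_distribution N "pmf D c" by unfold_locales (auto simp: pmf_le_1)
  have "measure_pmf.prob (Pi_pmf {..<N} dflt (\<lambda>_. D))
           {v. \<bar>real (card {i\<in>{..<N}. v i = c}) - N * pmf D c\<bar> \<ge> s * sqrt N}
       = measure_pmf.prob (map_pmf (\<lambda>v. card {i\<in>{..<N}. v i = c}) (Pi_pmf {..<N} dflt (\<lambda>_. D)))
           {x. \<bar>real x - N * pmf D c\<bar> \<ge> s * sqrt N}"
    by (simp add: vimage_def)
  also have "\<dots> \<le> 2 * exp (-2 * ((s * sqrt N)\<^sup>2 / N))"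
    unfolding count_binomial using prob_abs_ge[of "s * sqrt N"] assms by auto
  also have "(s * sqrt N)\<^sup>2 / N = s\<^sup>2" using assms by (simp add: power_mult_distrib)
  finally show ?thesis .
qed


definition cntL :: "nat \<Rightarrow> (nat \<Rightarrow> 'a) \<Rightarrow> 'a \<Rightarrow> nat" where
  "cntL N yc c = card {i\<in>{..<N}. yc i = c}"

lemma prob_fst_pair: "measure_pmf.prob (pair_pmf M N) {x. fst x \<in> X} = measure_pmf.prob M X"
proof -
  have "measure_pmf.prob (pair_pmf M N) {x. fst x \<in> X} = measure_pmf.prob (map_pmf fst (pair_pmf M N)) X"
    by (simp add: vimage_def)
  then show ?thesis by (simp add: map_fst_pair_pmf)
qed

lemma prob_snd_pair: "measure_pmf.prob (pair_pmf M N) {x. snd x \<in> X} = measure_pmf.prob N X"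
proof -
  have "measure_pmf.prob (pair_pmf M N) {x. snd x \<in> X} = measure_pmf.prob (map_pmf snd (pair_pmf M N)) X"
    by (simp add: vimage_def)
  then show ?thesis by (simp add: map_snd_pair_pmf)
qed

lemma prob_good:
  fixes D1 :: "'c::finite pmf" and D2 :: "'d::finite pmf" and N N' :: nat
  assumes "N > 0" "N' > 0" "s \<ge> 0"
  shows "measure_pmf.prob (pair_pmf (Pi_pmf {..<N} d1 (\<lambda>_. D1)) (Pi_pmf {..<N'} d2 (\<lambda>_. D2)))
     {x. (\<forall>c. \<bar>real (cntL N (fst x) c) - N * pmf D1 c\<bar> < s * sqrt N) \<and>
         (\<forall>k. \<bar>real (cntL N' (snd x) k) - N' * pmf D2 k\<bar> < s * sqrt N')}
     \<ge> 1 - 2 * (CARD('c) + CARD('d)) * exp (-2 * s\<^sup>2)"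
proof -
  let ?M = "pair_pmf (Pi_pmf {..<N} d1 (\<lambda>_. D1)) (Pi_pmf {..<N'} d2 (\<lambda>_. D2))"
  define B1 :: "'c \<Rightarrow> ((nat \<Rightarrow> 'c) \<times> (nat \<Rightarrow> 'd)) set" where "B1 c = {x. fst x \<in> {v. \<bar>real (card {i\<in>{..<N}. v i = c}) - N * pmf D1 c\<bar> \<ge> s * sqrt N}}" for c
  define B2 :: "'d \<Rightarrow> ((nat \<Rightarrow> 'c) \<times> (nat \<Rightarrow> 'd)) set" where "B2 k = {x. snd x \<in> {v. \<bar>real (card {i\<in>{..<N'}. v i = k}) - N' * pmf D2 k\<bar> \<ge> s * sqrt N'}}" for k
  let ?G = "{x. (\<forall>c. \<bar>real (cntL N (fst x) c) - N * pmf D1 c\<bar> < s * sqrt N) \<and>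
         (\<forall>k. \<bar>real (cntL N' (snd x) k) - N' * pmf D2 k\<bar> < s * sqrt N')}"
  have G: "?G = UNIV - ((\<Union>c. B1 c) \<union> (\<Union>k. B2 k))"
    by (auto simp: B1_def B2_def cntL_def not_le) (metis not_le)+
  have "measure_pmf.prob ?M ((\<Union>c. B1 c) \<union> (\<Union>k. B2 k)) \<le>
        measure_pmf.prob ?M (\<Union>c. B1 c) + measure_pmf.prob ?M (\<Union>k. B2 k)"
    by (rule measure_Un_le) auto
  also have "measure_pmf.prob ?M (\<Union>c. B1 c) \<le> (\<Sum>c\<in>UNIV. measure_pmf.prob ?M (B1 c))"
    by (rule measure_pmf.finite_measure_subadditive_finite) auto
  also have "\<dots> \<le> (\<Sum>c\<in>(UNIV::'c set). 2 * exp (-2 * s\<^sup>2))"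
    by (intro sum_mono) (simp only: B1_def prob_fst_pair count_tail assms)
  also have "measure_pmf.prob ?M (\<Union>k. B2 k) \<le> (\<Sum>k\<in>UNIV. measure_pmf.prob ?M (B2 k))"
    by (rule measure_pmf.finite_measure_subadditive_finite) auto
  also have "\<dots> \<le> (\<Sum>c\<in>(UNIV::'d set). 2 * exp (-2 * s\<^sup>2))"
    by (intro sum_mono) (simp only: B2_def prob_snd_pair count_tail assms)
  finally have bad: "measure_pmf.prob ?M ((\<Union>c. B1 c) \<union> (\<Union>k. B2 k)) \<le> 2 * (CARD('c) + CARD('d)) * exp (-2 * s\<^sup>2)"
    by (simp add: algebra_simps)
  have "measure_pmf.prob ?M ?G = 1 - measure_pmf.prob ?M ((\<Union>c. B1 c) \<union> (\<Union>k. B2 k))"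
    unfolding G using measure_pmf.prob_compl[of "(\<Union>c. B1 c) \<union> (\<Union>k. B2 k)" ?M] by simp
  then show ?thesis using bad by linarith
qed


definition PL :: "('l::finite, 'k::finite) param \<Rightarrow> 'l \<times> 'k \<Rightarrow> real" where
  "PL \<theta> c = fst \<theta> $ fst c * snd (snd \<theta>) $ fst c $ snd c"

definition QU :: "('l::finite, 'k::finite) param \<Rightarrow> 'k \<Rightarrow> real" where
  "QU \<theta> k = (\<Sum>l\<in>UNIV. fst (snd \<theta>) $ l * snd (snd \<theta>) $ l $ k)"

definition Lc :: "('l \<times> 'k \<Rightarrow> nat) \<Rightarrow> ('k \<Rightarrow> nat) \<Rightarrow> ('l::finite, 'k::finite) param \<Rightarrow> real" where
  "Lc n m \<theta> = (\<Prod>c\<in>UNIV. PL \<theta> c ^ n c) * (\<Prod>k\<in>UNIV. QU \<theta> k ^ m k)"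

lemma prod_count:
  fixes h :: "'c::finite \<Rightarrow> real"
  shows "(\<Prod>i<N. h (yc i)) = (\<Prod>c\<in>UNIV. h c ^ cntL N yc c)"
proof (induction N)
  case 0
  then show ?case by (simp add: cntL_def)
next
  case (Suc N)
  have cS: "cntL (Suc N) yc c = cntL N yc c + (if yc N = c then 1 else 0)" for c
  proof -
    have "{i\<in>{..<Suc N}. yc i = c} = {i\<in>{..<N}. yc i = c} \<union> (if yc N = c then {N} else {})"
      by (auto simp: less_Suc_eq)
    then show ?thesis by (simp add: cntL_def)
  qed
  have "(\<Prod>c\<in>UNIV. h c ^ cntL (Suc N) yc c) = (\<Prod>c\<in>UNIV. h c ^ cntL N yc c * (if yc N = c then h c else 1))"
    by (intro prod.cong refl) (simp add: cS power_add)
  also have "\<dots> = (\<Prod>c\<in>UNIV. h c ^ cntL N yc c) * (\<Prod>c\<in>UNIV. (if yc N = c then h c else 1))"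
    by (rule prod.distrib)
  also have "(\<Prod>c\<in>UNIV. (if yc N = c then h c else 1)) = h (yc N)"
    by (simp add: prod.If_cases)
  finally show ?case using Suc by simp
qed

lemma likelihood_Lc:
  "likelihood N N' yc c' \<theta> = Lc (cntL N yc) (cntL N' c') \<theta>"
proof -
  obtain p p' f where th: "\<theta> = (p, p', f)" by (cases \<theta>) auto
  have 1: "(\<Prod>i<N. p$(fst (yc i)) * f$(fst (yc i))$(snd (yc i))) = (\<Prod>c\<in>UNIV. PL \<theta> c ^ cntL N yc c)"
    using prod_count[where h="PL \<theta>" and N=N and yc=yc] by (simp add: PL_def th)
  have 2: "(\<Prod>j<N'. \<Sum>l\<in>UNIV. p'$l * f$l$(c' j)) = (\<Prod>k\<in>UNIV. QU \<theta> k ^ cntL N' c' k)"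
    using prod_count[where h="QU \<theta>" and N=N' and yc=c'] by (simp add: QU_def th)
  show ?thesis unfolding likelihood_def Lc_def using 1 2 by (simp add: th)
qed

lemma simplex_pos: "y \<in> open_simplex \<Longrightarrow> 0 < y$i" by (simp add: open_simplex_def)
lemma simplex_le1: "y \<in> open_simplex \<Longrightarrow> y$i \<le> 1" by (simp add: open_simplex_def less_imp_le)
lemma simplex_sum: "y \<in> open_simplex \<Longrightarrow> (\<Sum>i\<in>UNIV. y$i) = 1" by (simp add: open_simplex_def)

lemma param_spaceD:
  assumes "\<theta> \<in> param_space"
  shows "fst \<theta> \<in> open_simplex" "fst (snd \<theta>) \<in> open_simplex" "\<And>l. snd (snd \<theta>) $ l \<in> open_simplex"
  using assms by (auto simp: param_space_def)

lemma PL_pos: "\<theta> \<in> param_space \<Longrightarrow> 0 < PL \<theta> c"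
  using param_spaceD[of \<theta>] by (simp add: PL_def simplex_pos)

lemma PL_le1: "\<theta> \<in> param_space \<Longrightarrow> PL \<theta> c \<le> 1"
  using param_spaceD[of \<theta>] unfolding PL_def
  by (intro mult_le_one) (auto simp: simplex_le1 simplex_pos less_imp_le)

lemma QU_pos: "\<theta> \<in> param_space \<Longrightarrow> 0 < QU \<theta> k"
  using param_spaceD[of \<theta>] unfolding QU_def
  by (intro sum_pos) (auto simp: simplex_pos)

lemma QU_le1: "\<theta> \<in> param_space \<Longrightarrow> QU \<theta> k \<le> 1"
proof -
  assume a: "\<theta> \<in> param_space"
  have "QU \<theta> k \<le> (\<Sum>l\<in>UNIV. fst (snd \<theta>) $ l)" unfolding QU_def
    using param_spaceD[OF a]
    by (intro sum_mono) (auto intro!: mult_left_le simp: simplex_le1 simplex_pos less_imp_le)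
  then show ?thesis using param_spaceD(2)[OF a] by (simp add: simplex_sum)
qed

lemma PL_sum: "\<theta> \<in> param_space \<Longrightarrow> (\<Sum>c\<in>UNIV. PL \<theta> c) = 1"
proof -
  assume a: "\<theta> \<in> param_space"
  have "(\<Sum>c\<in>UNIV. PL \<theta> c) = (\<Sum>l\<in>UNIV. \<Sum>k\<in>UNIV. PL \<theta> (l,k))"
    by (simp add: sum.cartesian_product UNIV_Times_UNIV[symmetric] del: UNIV_Times_UNIV)
  also have "\<dots> = (\<Sum>l\<in>UNIV. fst \<theta> $ l * (\<Sum>k\<in>UNIV. snd (snd \<theta>) $ l $ k))"
    by (simp add: PL_def sum_distrib_left)
  also have "\<dots> = 1" using param_spaceD[OF a] by (simp add: simplex_sum)
  finally show ?thesis .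
qed

lemma QU_sum: "\<theta> \<in> param_space \<Longrightarrow> (\<Sum>k\<in>UNIV. QU \<theta> k) = 1"
proof -
  assume a: "\<theta> \<in> param_space"
  have "(\<Sum>k\<in>UNIV. QU \<theta> k) = (\<Sum>l\<in>UNIV. fst (snd \<theta>) $ l * (\<Sum>k\<in>UNIV. snd (snd \<theta>) $ l $ k))"
    unfolding QU_def by (subst sum.swap) (simp add: sum_distrib_left)
  also have "\<dots> = 1" using param_spaceD[OF a] by (simp add: simplex_sum)
  finally show ?thesis .
qed

lemma Lc_pos: "\<theta> \<in> param_space \<Longrightarrow> 0 < Lc n m \<theta>"
  unfolding Lc_def by (intro mult_pos_pos prod_pos) (auto simp: PL_pos QU_pos)

lemma Lc_add: "Lc (\<lambda>c. a c + b c) (\<lambda>k. a' k + b' k) \<theta> = Lc a a' \<theta> * Lc b b' \<theta>"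
  unfolding Lc_def by (simp add: power_add prod.distrib mult_ac)

lemma Lc_anti:
  assumes "\<theta> \<in> param_space" "\<And>c. a c \<le> b c" "\<And>k. a' k \<le> b' k"
  shows "Lc b b' \<theta> \<le> Lc a a' \<theta>"
proof -
  have "Lc b b' \<theta> = Lc a a' \<theta> * Lc (\<lambda>c. b c - a c) (\<lambda>k. b' k - a' k) \<theta>"
    using Lc_add[of a "\<lambda>c. b c - a c" a' "\<lambda>k. b' k - a' k" \<theta>] assms(2,3) by simp
  also have "\<dots> \<le> Lc a a' \<theta> * 1"
    using assms(1) unfolding Lc_def[of "\<lambda>c. b c - a c"]
    by (intro mult_left_mono mult_le_one prod_le_1 conjI power_le_one)
       (auto simp: PL_pos QU_pos PL_le1 QU_le1 less_imp_le Lc_pos prod_nonneg)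
  finally show ?thesis by simp
qed

lemma ln_Lc: "\<theta> \<in> param_space \<Longrightarrow>
   ln (Lc n m \<theta>) = (\<Sum>c\<in>UNIV. real (n c) * ln (PL \<theta> c)) + (\<Sum>k\<in>UNIV. real (m k) * ln (QU \<theta> k))"
proof -
  assume a: "\<theta> \<in> param_space"
  have p: "\<And>c. PL \<theta> c > 0" "\<And>k. QU \<theta> k > 0" using PL_pos[OF a] QU_pos[OF a] by auto
  have pn: "\<And>c. PL \<theta> c \<noteq> 0" "\<And>k. QU \<theta> k \<noteq> 0" using p by (metis less_irrefl)+
  have 1: "ln (\<Prod>c\<in>UNIV. PL \<theta> c ^ n c) = (\<Sum>c\<in>UNIV. ln (PL \<theta> c ^ n c))"
    by (intro ln_prod) (simp_all add: pn)
  have 2: "ln (\<Prod>k\<in>UNIV. QU \<theta> k ^ m k) = (\<Sum>k\<in>UNIV. ln (QU \<theta> k ^ m k))"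
    by (intro ln_prod) (simp_all add: pn)
  have 3: "(\<Prod>c\<in>UNIV. PL \<theta> c ^ n c) > 0" "(\<Prod>k\<in>UNIV. QU \<theta> k ^ m k) > 0"
    using p by (auto intro!: prod_pos)
  have 4: "(\<Sum>c\<in>UNIV. ln (PL \<theta> c ^ n c)) = (\<Sum>c\<in>UNIV. real (n c) * ln (PL \<theta> c))"
    by (intro sum.cong refl ln_realpow p)
  have 5: "(\<Sum>k\<in>UNIV. ln (QU \<theta> k ^ m k)) = (\<Sum>k\<in>UNIV. real (m k) * ln (QU \<theta> k))"
    by (intro sum.cong refl ln_realpow p)
  have "ln (Lc n m \<theta>) = ln (\<Prod>c\<in>UNIV. PL \<theta> c ^ n c) + ln (\<Prod>k\<in>UNIV. QU \<theta> k ^ m k)"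
    unfolding Lc_def by (rule ln_mult_pos) (rule 3)+
  then show ?thesis by (simp only: 1 2 4 5)
qed

lemma ln_le_sqrt: "0 < u \<Longrightarrow> ln u \<le> 2 * (sqrt u - 1)"
proof -
  assume u: "0 < u"
  have "ln u = 2 * ln (sqrt u)" using u by (simp add: ln_sqrt)
  also have "ln (sqrt u) \<le> sqrt u - 1" using u by (intro ln_le_minus_one) simp
  finally show ?thesis by simp
qed

lemma hell_term:
  fixes x P n M :: real
  assumes "0 < x" "0 < P" "0 \<le> n" "0 < M"
  shows "n * ln (x / P) \<le> 2 * M * (sqrt x * sqrt P - P) + M / 2 * (sqrt x - sqrt P)\<^sup>2
            + 2 * (n - M * P)\<^sup>2 / (M * P)"
proof -
  define e where "e = n - M * P"
  define d where "d = sqrt x - sqrt P"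
  have sP: "sqrt P > 0" using assms by simp
  have "n * ln (x / P) \<le> n * (2 * (sqrt (x / P) - 1))"
    using assms by (intro mult_left_mono ln_le_sqrt) auto
  also have "\<dots> = 2 * M * (sqrt x * sqrt P - P) + 2 * e * d / sqrt P"
    using sP assms unfolding e_def d_def
    by (simp add: real_sqrt_divide field_simps)
  also have "2 * e * d / sqrt P \<le> M / 2 * d\<^sup>2 + 2 * e\<^sup>2 / (M * P)"
  proof -
    have "0 \<le> (M * d - 2 * e / sqrt P)\<^sup>2 / (2 * M)" using assms by simp
    also have "(M * d - 2 * e / sqrt P)\<^sup>2 / (2 * M) = M / 2 * d\<^sup>2 + 2 * e\<^sup>2 / (M * P) - 2 * e * d / sqrt P"
      using assms sP by (simp add: power2_eq_square field_simps) 
    finally show ?thesis by simp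
  qed
  finally show ?thesis unfolding e_def d_def by simp
qed

lemma hellinger_bound:
  fixes x P n :: "'c::finite \<Rightarrow> real"
  assumes "\<And>c. 0 < x c" "\<And>c. 0 < P c" "\<And>c. 0 \<le> n c" "0 < M"
    and "(\<Sum>c\<in>UNIV. x c) = 1" "(\<Sum>c\<in>UNIV. P c) = 1"
  shows "(\<Sum>c\<in>UNIV. n c * ln (x c / P c)) \<le>
          - (M / 2) * (\<Sum>c\<in>UNIV. (sqrt (x c) - sqrt (P c))\<^sup>2)
          + (\<Sum>c\<in>UNIV. 2 * (n c - M * P c)\<^sup>2 / (M * P c))"
proof -
  have "(\<Sum>c\<in>UNIV. n c * ln (x c / P c)) \<le> (\<Sum>c\<in>UNIV. 2 * M * (sqrt (x c) * sqrt (P c) - P c)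
     + M / 2 * (sqrt (x c) - sqrt (P c))\<^sup>2 + 2 * (n c - M * P c)\<^sup>2 / (M * P c))"
    by (intro sum_mono hell_term assms)
  also have "\<dots> = 2 * M * (\<Sum>c\<in>UNIV. sqrt (x c) * sqrt (P c) - P c)
     + M / 2 * (\<Sum>c\<in>UNIV. (sqrt (x c) - sqrt (P c))\<^sup>2) + (\<Sum>c\<in>UNIV. 2 * (n c - M * P c)\<^sup>2 / (M * P c))"
    by (simp add: sum.distrib sum_distrib_left)
  also have "(\<Sum>c\<in>UNIV. sqrt (x c) * sqrt (P c) - P c) = - (1/2) * (\<Sum>c\<in>UNIV. (sqrt (x c) - sqrt (P c))\<^sup>2)"
  proof -
    have "(\<Sum>c\<in>UNIV. (sqrt (x c) - sqrt (P c))\<^sup>2) = (\<Sum>c\<in>UNIV. x c + P c - 2 * (sqrt (x c) * sqrt (P c)))"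
      using assms by (intro sum.cong refl) (simp add: power2_diff less_imp_le)
    also have "\<dots> = 2 - 2 * (\<Sum>c\<in>UNIV. sqrt (x c) * sqrt (P c))"
      using assms by (simp add: sum.distrib sum_subtractf sum_distrib_left)
    finally show ?thesis using assms by (simp add: sum_subtractf algebra_simps)
  qed
  finally show ?thesis by (simp add: algebra_simps)
qed


lemma ratio_bound:
  fixes a as b bs k pm K :: real
  assumes "0 < as" "pm \<le> as" "0 < pm" "as / 2 \<le> a" "\<bar>a - as\<bar> \<le> K * k" "\<bar>b - bs\<bar> \<le> k"
    "0 \<le> bs" "bs \<le> as" "0 \<le> k" "0 \<le> K"
  shows "\<bar>b / a - bs / as\<bar> \<le> 2 * (1 + K) * k / pm"
proof -
  have a0: "0 < a" using assms by linarith
  have eq: "b / a - bs / as = (b - bs) / a + (bs / as) * (as - a) / a"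
    using a0 assms(1) by (simp add: field_simps)
  have t1: "\<bar>(b - bs) / a\<bar> \<le> k / a"
    using a0 assms(6) by (simp add: divide_right_mono)
  have r: "\<bar>bs / as\<bar> \<le> 1" using assms(1,7,8) by simp
  have "\<bar>(bs / as) * (as - a)\<bar> = \<bar>bs / as\<bar> * \<bar>as - a\<bar>" by (rule abs_mult)
  also have "\<dots> \<le> 1 * (K * k)"
    using r assms(5) by (intro mult_mono) (auto simp: abs_minus_commute)
  finally have t2': "\<bar>(bs / as) * (as - a)\<bar> \<le> K * k" by simp
  have t2: "\<bar>(bs / as) * (as - a) / a\<bar> \<le> K * k / a"
  proof -
    have "\<bar>(bs / as) * (as - a) / a\<bar> = \<bar>(bs / as) * (as - a)\<bar> / a" using a0 by (simp only: abs_divide)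
    also have "\<dots> \<le> K * k / a" using a0 by (intro divide_right_mono t2') simp
    finally show ?thesis .
  qed
  have "\<bar>b / a - bs / as\<bar> \<le> \<bar>(b - bs) / a\<bar> + \<bar>(bs / as) * (as - a) / a\<bar>"
    unfolding eq by (rule abs_triangle_ineq)
  also have "\<dots> \<le> k / a + K * k / a" using t1 t2 by (rule add_mono)
  also have "\<dots> = (1 + K) * k / a" by (simp add: add_divide_distrib distrib_right)
  also have "\<dots> \<le> (1 + K) * k / (pm / 2)"
    using assms a0 by (intro divide_left_mono mult_nonneg_nonneg mult_pos_pos) auto
  also have "(1 + K) * k / (pm / 2) = 2 * (1 + K) * k / pm" by (simp add: field_simps)
  finally show ?thesis .
qed

lemma sum_abs_bound:
  fixes g :: "'c::finite \<Rightarrow> real"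
  assumes "\<And>c. \<bar>g c\<bar> \<le> B"
  shows "\<bar>\<Sum>c\<in>UNIV. g c\<bar> \<le> real CARD('c) * B"
proof -
  have "\<bar>\<Sum>c\<in>UNIV. g c\<bar> \<le> (\<Sum>c\<in>UNIV. \<bar>g c\<bar>)" by (rule sum_abs)
  also have "\<dots> \<le> (\<Sum>c\<in>(UNIV::'c set). B)" by (intro sum_mono assms)
  finally show ?thesis by simp
qed

lemma norm_vec_bound:
  fixes x :: "real^'c::finite"
  assumes "\<And>c. \<bar>x$c\<bar> \<le> B"
  shows "norm x \<le> real CARD('c) * B"
proof -
  have "norm x \<le> (\<Sum>c\<in>UNIV. \<bar>x$c\<bar>)" by (rule norm_le_l1_cart)
  also have "\<dots> \<le> (\<Sum>c\<in>(UNIV::'c set). B)" by (intro sum_mono assms)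
  finally show ?thesis by simp
qed

lemma norm_mat_bound:
  fixes x :: "real^'c::finite^'d::finite"
  assumes "\<And>d c. \<bar>x$d$c\<bar> \<le> B"
  shows "norm x \<le> real CARD('d) * (real CARD('c) * B)"
proof -
  have "norm x \<le> (\<Sum>d\<in>UNIV. norm (x$d))" unfolding norm_vec_def by (rule L2_set_le_sum) auto
  also have "\<dots> \<le> (\<Sum>d\<in>(UNIV::'d set). real CARD('c) * B)" by (intro sum_mono norm_vec_bound assms)
  finally show ?thesis by simp
qed

lemma ident_kappa:
  fixes \<pi>s \<pi>s' :: "real^'l::finite" and \<phi>s :: "real^'k::finite^'l" and \<theta> :: "('l,'k) param"
  assumes ths: "(\<pi>s, \<pi>s', \<phi>s) \<in> param_space" and th: "\<theta> \<in> param_space"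
    and pm: "0 < pm" "\<And>l. pm \<le> \<pi>s$l"
    and beta: "0 < \<beta>" "\<And>v. \<beta> * norm v \<le> norm (transpose \<phi>s *v v)"
    and k: "0 \<le> k" "real CARD('k) * k \<le> pm / 2"
    and hP: "\<And>c. \<bar>PL \<theta> c - PL (\<pi>s, \<pi>s', \<phi>s) c\<bar> \<le> k"
    and hQ: "\<And>j. \<bar>QU \<theta> j - QU (\<pi>s, \<pi>s', \<phi>s) j\<bar> \<le> k"
  shows "dist \<theta> (\<pi>s, \<pi>s', \<phi>s) \<le> k * (real CARD('l) * real CARD('k)
     + real CARD('k) * (1 + real CARD('l) * (2 * (1 + real CARD('k)) / pm)) / \<beta>
     + real CARD('l) * (real CARD('k) * (2 * (1 + real CARD('k)) / pm)))"
proof -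
  obtain p p' f where thd: "\<theta> = (p, p', f)" by (cases \<theta>) auto
  define K where "K = real CARD('k)"
  define L where "L = real CARD('l)"
  define e where "e = 2 * (1 + K) * k / pm"
  have S: "p \<in> open_simplex" "p' \<in> open_simplex" "\<And>l. f$l \<in> open_simplex"
    using th thd by (auto simp: param_space_def)
  have Ss: "\<pi>s \<in> open_simplex" "\<pi>s' \<in> open_simplex" "\<And>l. \<phi>s$l \<in> open_simplex"
    using ths by (auto simp: param_space_def)
  have psum: "p$l = (\<Sum>j\<in>UNIV. PL \<theta> (l,j))" for l
    using simplex_sum[OF S(3)[of l]] by (simp add: PL_def thd sum_distrib_left[symmetric])
  have pssum: "\<pi>s$l = (\<Sum>j\<in>UNIV. PL (\<pi>s, \<pi>s', \<phi>s) (l,j))" for l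
    using simplex_sum[OF Ss(3)[of l]] by (simp add: PL_def sum_distrib_left[symmetric])
  have pd: "\<bar>p$l - \<pi>s$l\<bar> \<le> K * k" for l
  proof -
    have "\<bar>p$l - \<pi>s$l\<bar> = \<bar>\<Sum>j\<in>UNIV. PL \<theta> (l,j) - PL (\<pi>s, \<pi>s', \<phi>s) (l,j)\<bar>"
      by (simp add: psum pssum sum_subtractf)
    also have "\<dots> \<le> K * k" unfolding K_def by (rule sum_abs_bound) (rule hP)
    finally show ?thesis .
  qed
  have fd: "\<bar>f$l$j - \<phi>s$l$j\<bar> \<le> e" for l j
  proof -
    have "\<bar>PL \<theta> (l,j) / p$l - PL (\<pi>s, \<pi>s', \<phi>s) (l,j) / \<pi>s$l\<bar> \<le> e"
      unfolding e_def
    proof (rule ratio_bound[OF _ pm(2) pm(1) _ pd hP])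
      show "0 < \<pi>s$l" using Ss by (simp add: simplex_pos)
      show "\<pi>s$l / 2 \<le> p$l" using pd[of l] pm(2)[of l] k unfolding K_def by linarith
      show "0 \<le> PL (\<pi>s, \<pi>s', \<phi>s) (l,j)" using PL_pos[OF ths] by (simp add: less_imp_le)
      show "PL (\<pi>s, \<pi>s', \<phi>s) (l,j) \<le> \<pi>s$l" unfolding PL_def using Ss
        by (auto intro!: mult_left_le simp: simplex_le1 simplex_pos less_imp_le)
      show "0 \<le> k" by fact
      show "0 \<le> K" by (simp add: K_def)
    qed
    moreover have "PL \<theta> (l,j) / p$l = f$l$j" using S by (simp add: PL_def thd simplex_pos less_imp_neq[symmetric])
    moreover have "PL (\<pi>s, \<pi>s', \<phi>s) (l,j) / \<pi>s$l = \<phi>s$l$j"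
      using Ss by (simp add: PL_def simplex_pos less_imp_neq[symmetric])
    ultimately show ?thesis by simp
  qed
  have e0: "0 \<le> e" unfolding e_def K_def using k pm by simp
  define v where "v = p' - \<pi>s'"
  have Tv: "\<bar>(transpose \<phi>s *v v)$j\<bar> \<le> k + L * e" for j
  proof -
    have "(transpose \<phi>s *v v)$j = (\<Sum>l\<in>UNIV. \<phi>s$l$j * (p'$l - \<pi>s'$l))"
      by (simp add: matrix_vector_mult_def transpose_def v_def)
    also have "\<dots> = (QU \<theta> j - QU (\<pi>s, \<pi>s', \<phi>s) j) - (\<Sum>l\<in>UNIV. p'$l * (f$l$j - \<phi>s$l$j))"
      by (simp add: QU_def thd sum_subtractf algebra_simps)
    finally have "\<bar>(transpose \<phi>s *v v)$j\<bar> \<le> \<bar>QU \<theta> j - QU (\<pi>s, \<pi>s', \<phi>s) j\<bar> + \<bar>\<Sum>l\<in>UNIV. p'$l * (f$l$j - \<phi>s$l$j)\<bar>"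
      by linarith
    also have "\<bar>\<Sum>l\<in>UNIV. p'$l * (f$l$j - \<phi>s$l$j)\<bar> \<le> L * e"
      unfolding L_def
    proof (rule sum_abs_bound)
      fix l
      have "\<bar>p'$l * (f$l$j - \<phi>s$l$j)\<bar> \<le> 1 * e" unfolding abs_mult
        using S(2) fd[of l j] by (intro mult_mono) (auto simp: simplex_le1 simplex_pos less_imp_le)
      then show "\<bar>p'$l * (f$l$j - \<phi>s$l$j)\<bar> \<le> e" by simp
    qed
    finally show ?thesis using hQ[of j] by linarith
  qed
  have nv: "norm v \<le> K * (k + L * e) / \<beta>"
  proof -
    have "norm (transpose \<phi>s *v v) \<le> K * (k + L * e)" unfolding K_def by (rule norm_vec_bound) (rule Tv)
    then have "\<beta> * norm v \<le> K * (k + L * e)" using beta(2)[of v] by linarith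
    then show ?thesis using beta(1) by (simp add: field_simps)
  qed
  have np: "norm (p - \<pi>s) \<le> L * (K * k)" unfolding L_def by (rule norm_vec_bound) (simp add: pd)
  have nf: "norm (f - \<phi>s) \<le> L * (K * e)" unfolding L_def K_def by (rule norm_mat_bound) (simp add: fd)
  have "dist \<theta> (\<pi>s, \<pi>s', \<phi>s) = norm (p - \<pi>s, p' - \<pi>s', f - \<phi>s)"
    by (simp add: thd dist_norm)
  also have "\<dots> \<le> norm (p - \<pi>s) + norm (p' - \<pi>s', f - \<phi>s)" by (rule norm_Pair_le)
  also have "norm (p' - \<pi>s', f - \<phi>s) \<le> norm (p' - \<pi>s') + norm (f - \<phi>s)" by (rule norm_Pair_le)
  finally have "dist \<theta> (\<pi>s, \<pi>s', \<phi>s) \<le> L * (K * k) + K * (k + L * e) / \<beta> + L * (K * e)"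
    using np nv nf unfolding v_def by linarith
  also have "\<dots> = k * (L * K + K * (1 + L * (2 * (1 + K) / pm)) / \<beta> + L * (K * (2 * (1 + K) / pm)))"
    unfolding e_def by (simp add: field_simps)
  finally show ?thesis unfolding K_def L_def .
qed


definition H1 :: "('l::finite,'k::finite) param \<Rightarrow> ('l,'k) param \<Rightarrow> real" where
  "H1 \<theta> \<theta>s = (\<Sum>c\<in>UNIV. (sqrt (PL \<theta> c) - sqrt (PL \<theta>s c))\<^sup>2)"
definition H2 :: "('l::finite,'k::finite) param \<Rightarrow> ('l,'k) param \<Rightarrow> real" where
  "H2 \<theta> \<theta>s = (\<Sum>j\<in>UNIV. (sqrt (QU \<theta> j) - sqrt (QU \<theta>s j))\<^sup>2)"

lemma det_core:
  fixes \<theta>s \<theta> :: "('l::finite,'k::finite) param"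
  assumes ths: "\<theta>s \<in> param_space" and th: "\<theta> \<in> param_space"
    and map: "prior \<theta>s * Lc n m \<theta>s \<le> prior \<theta> * Lc n m \<theta>"
    and bnd: "prior \<theta> * Lc (\<lambda>_. t0) (\<lambda>_. t0) \<theta> \<le> B"
    and pr: "0 < prior \<theta>s"
    and nn: "\<And>c. n c = t0 + n' c" and mm: "\<And>j. m j = t0 + m' j"
    and M1: "M1 = (\<Sum>c\<in>UNIV. real (n' c))" "0 < M1"
    and M2: "M2 = (\<Sum>j\<in>UNIV. real (m' j))" "0 < M2"
  shows "ln (prior \<theta>s * Lc (\<lambda>_. t0) (\<lambda>_. t0) \<theta>s) - ln B \<le>
     - (M1 / 2) * H1 \<theta> \<theta>s + (\<Sum>c\<in>UNIV. 2 * (real (n' c) - M1 * PL \<theta>s c)\<^sup>2 / (M1 * PL \<theta>s c))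
     - (M2 / 2) * H2 \<theta> \<theta>s + (\<Sum>j\<in>UNIV. 2 * (real (m' j) - M2 * QU \<theta>s j)\<^sup>2 / (M2 * QU \<theta>s j))"
proof -
  have n_eq: "n = (\<lambda>c. t0 + n' c)" "m = (\<lambda>j. t0 + m' j)" using nn mm by auto
  have split: "Lc n m x = Lc (\<lambda>_. t0) (\<lambda>_. t0) x * Lc n' m' x" for x
    unfolding n_eq by (rule Lc_add)
  define A where "A = prior \<theta>s * Lc (\<lambda>_. t0) (\<lambda>_. t0) \<theta>s"
  have A0: "0 < A" unfolding A_def using pr Lc_pos[OF ths] by simp
  have L1: "0 < Lc n' m' \<theta>s" "0 < Lc n' m' \<theta>" using Lc_pos[OF ths] Lc_pos[OF th] by auto
  have "A * Lc n' m' \<theta>s \<le> prior \<theta> * Lc (\<lambda>_. t0) (\<lambda>_. t0) \<theta> * Lc n' m' \<theta>"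
    using map unfolding A_def split by (simp add: mult_ac)
  also have "\<dots> \<le> B * Lc n' m' \<theta>" using bnd L1 by (intro mult_right_mono) auto
  finally have ineq: "A * Lc n' m' \<theta>s \<le> B * Lc n' m' \<theta>" .
  have B0: "0 < B" using ineq A0 L1 by (smt (verit) mult_pos_pos mult_nonpos_nonneg)
  have "ln (A * Lc n' m' \<theta>s) \<le> ln (B * Lc n' m' \<theta>)"
    using ineq A0 L1 B0 by (subst ln_le_cancel_iff) auto
  then have "ln A - ln B \<le> ln (Lc n' m' \<theta>) - ln (Lc n' m' \<theta>s)"
    using A0 B0 L1 by (simp add: ln_mult_pos)
  also have "\<dots> = (\<Sum>c\<in>UNIV. real (n' c) * ln (PL \<theta> c / PL \<theta>s c))
               + (\<Sum>j\<in>UNIV. real (m' j) * ln (QU \<theta> j / QU \<theta>s j))"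
  proof -
    have a: "(\<Sum>c\<in>UNIV. real (n' c) * ln (PL \<theta> c / PL \<theta>s c)) =
       (\<Sum>c\<in>UNIV. real (n' c) * ln (PL \<theta> c)) - (\<Sum>c\<in>UNIV. real (n' c) * ln (PL \<theta>s c))"
      unfolding sum_subtractf[symmetric]
      by (intro sum.cong refl) (simp add: ln_divide_pos PL_pos th ths right_diff_distrib)
    have b: "(\<Sum>j\<in>UNIV. real (m' j) * ln (QU \<theta> j / QU \<theta>s j)) =
       (\<Sum>j\<in>UNIV. real (m' j) * ln (QU \<theta> j)) - (\<Sum>j\<in>UNIV. real (m' j) * ln (QU \<theta>s j))"
      unfolding sum_subtractf[symmetric]
      by (intro sum.cong refl) (simp add: ln_divide_pos QU_pos th ths right_diff_distrib)
    show ?thesis unfolding a b ln_Lc[OF th] ln_Lc[OF ths] by simp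
  qed
  also have "(\<Sum>c\<in>UNIV. real (n' c) * ln (PL \<theta> c / PL \<theta>s c)) \<le>
     - (M1 / 2) * H1 \<theta> \<theta>s + (\<Sum>c\<in>UNIV. 2 * (real (n' c) - M1 * PL \<theta>s c)\<^sup>2 / (M1 * PL \<theta>s c))"
    unfolding H1_def
    by (rule hellinger_bound) (auto simp: PL_pos th ths PL_sum M1(2))
  also have "(\<Sum>j\<in>UNIV. real (m' j) * ln (QU \<theta> j / QU \<theta>s j)) \<le>
     - (M2 / 2) * H2 \<theta> \<theta>s + (\<Sum>j\<in>UNIV. 2 * (real (m' j) - M2 * QU \<theta>s j)\<^sup>2 / (M2 * QU \<theta>s j))"
    unfolding H2_def
    by (rule hellinger_bound) (auto simp: QU_pos th ths QU_sum M2(2))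
  finally show ?thesis unfolding A_def by linarith
qed

lemma sq_diff_le: 
  fixes x y :: real
  assumes "0 \<le> x" "x \<le> 1" "0 \<le> y" "y \<le> 1"
  shows "(x - y)\<^sup>2 \<le> 4 * (sqrt x - sqrt y)\<^sup>2"
proof -
  have "(sqrt x - sqrt y) * (sqrt x + sqrt y) = sqrt x * sqrt x - sqrt y * sqrt y"
    by (simp add: algebra_simps)
  also have "\<dots> = x - y" using assms by simp
  finally have "x - y = (sqrt x - sqrt y) * (sqrt x + sqrt y)" by simp
  then have "(x - y)\<^sup>2 = (sqrt x - sqrt y)\<^sup>2 * (sqrt x + sqrt y)\<^sup>2" by (simp add: power_mult_distrib)
  moreover have "(sqrt x + sqrt y)\<^sup>2 \<le> 2\<^sup>2" using assms
  proof (intro power_mono)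
    have "sqrt x \<le> 1" "sqrt y \<le> 1" using assms by auto
    then show "sqrt x + sqrt y \<le> 2" by linarith
  qed (use assms in auto)
  then have "(sqrt x - sqrt y)\<^sup>2 * (sqrt x + sqrt y)\<^sup>2 \<le> (sqrt x - sqrt y)\<^sup>2 * 2\<^sup>2"
    by (rule mult_left_mono) auto
  ultimately show ?thesis by (simp add: mult.commute)
qed

lemma H1_lower:
  assumes "\<theta> \<in> param_space" "\<theta>s \<in> param_space"
  shows "(PL \<theta> c - PL \<theta>s c)\<^sup>2 / 4 \<le> H1 \<theta> \<theta>s"
proof -
  have "(PL \<theta> c - PL \<theta>s c)\<^sup>2 \<le> 4 * (sqrt (PL \<theta> c) - sqrt (PL \<theta>s c))\<^sup>2"
    using assms by (intro sq_diff_le) (auto simp: PL_pos PL_le1 less_imp_le)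
  also have "(sqrt (PL \<theta> c) - sqrt (PL \<theta>s c))\<^sup>2 \<le> H1 \<theta> \<theta>s"
    unfolding H1_def by (rule member_le_sum) auto
  finally show ?thesis by simp
qed

lemma H2_lower:
  assumes "\<theta> \<in> param_space" "\<theta>s \<in> param_space"
  shows "(QU \<theta> c - QU \<theta>s c)\<^sup>2 / 4 \<le> H2 \<theta> \<theta>s"
proof -
  have "(QU \<theta> c - QU \<theta>s c)\<^sup>2 \<le> 4 * (sqrt (QU \<theta> c) - sqrt (QU \<theta>s c))\<^sup>2"
    using assms by (intro sq_diff_le) (auto simp: QU_pos QU_le1 less_imp_le)
  also have "(sqrt (QU \<theta> c) - sqrt (QU \<theta>s c))\<^sup>2 \<le> H2 \<theta> \<theta>s"
    unfolding H2_def by (rule member_le_sum) auto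
  finally show ?thesis by simp
qed

lemma H_nonneg: "0 \<le> H1 \<theta> \<theta>s" "0 \<le> H2 \<theta> \<theta>s"
  unfolding H1_def H2_def by (auto intro: sum_nonneg)

lemma sum_cntL: "(\<Sum>c\<in>(UNIV::'c::finite set). cntL N yc c) = N"
proof (induction N)
  case 0
  then show ?case by (simp add: cntL_def)
next
  case (Suc N)
  have cS: "cntL (Suc N) yc c = cntL N yc c + (if yc N = c then 1 else 0)" for c
  proof -
    have "{i\<in>{..<Suc N}. yc i = c} = {i\<in>{..<N}. yc i = c} \<union> (if yc N = c then {N} else {})"
      by (auto simp: less_Suc_eq)
    then show ?thesis by (simp add: cntL_def)
  qed
  show ?case by (simp add: cS sum.distrib Suc)
qed

lemma cntL_le: "cntL N yc c \<le> N"
proof -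
  have "cntL N yc c \<le> card {..<N}" unfolding cntL_def by (rule card_mono) auto
  then show ?thesis by simp
qed


lemma term_bound:
  fixes x N M P Pm s t nC :: real
  assumes M: "M = N - nC * t" "N / 2 \<le> M" and N: "1 \<le> N"
    and P: "0 < Pm" "Pm \<le> P" "P \<le> 1" and nC: "1 \<le> nC" and t: "0 \<le> t" and s: "0 \<le> s"
    and dev: "\<bar>x - N * P\<bar> \<le> s * sqrt N"
  shows "2 * (x - t - M * P)\<^sup>2 / (M * P) \<le> (8 * s\<^sup>2 + 8 * (nC * t)\<^sup>2) / Pm"
proof -
  define e where "e = x - t - M * P"
  define a where "a = s * sqrt N"
  define b where "b = nC * t"
  have e_eq: "e = (x - N * P) + (b * P - t)" unfolding e_def M(1) b_def by (simp add: algebra_simps)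
  have b0: "0 \<le> b" unfolding b_def using nC t by simp
  have a0: "0 \<le> a" unfolding a_def using s N by simp
  have r: "\<bar>b * P - t\<bar> \<le> b"
  proof -
    have "b * P \<le> b" using P b0 by (intro mult_right_le_one_le) auto
    moreover have "0 \<le> b * P" using P b0 by auto
    moreover have "t \<le> b" unfolding b_def using nC t by (simp add: mult_le_cancel_right1)
    ultimately show ?thesis using t unfolding abs_le_iff by linarith
  qed
  have ae: "\<bar>e\<bar> \<le> a + b" using e_eq dev r unfolding a_def by linarith
  have "\<bar>e\<bar>\<^sup>2 \<le> (a + b)\<^sup>2" by (rule power_mono[OF ae abs_ge_zero])
  then have e1: "e\<^sup>2 \<le> (a + b)\<^sup>2" by simp
  have id: "(a + b)\<^sup>2 + (a - b)\<^sup>2 = 2 * a\<^sup>2 + 2 * b\<^sup>2" by (simp add: power2_eq_square algebra_simps)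
  have "0 \<le> (a - b)\<^sup>2" by simp
  with e1 id have e2': "e\<^sup>2 \<le> 2 * a\<^sup>2 + 2 * b\<^sup>2" by linarith
  have a2: "a\<^sup>2 = s\<^sup>2 * N" unfolding a_def using N by (simp add: power_mult_distrib)
  have e2: "e\<^sup>2 \<le> 2 * s\<^sup>2 * N + 2 * b\<^sup>2" using e2' a2 by simp
  define c where "c = 2 * s\<^sup>2 + 2 * b\<^sup>2"
  have "b\<^sup>2 \<le> b\<^sup>2 * N" using N by (simp add: mult_le_cancel_left1)
  then have e3: "e\<^sup>2 \<le> N * c" using e2 unfolding c_def by (simp add: algebra_simps)
  have MP: "N / 2 * Pm \<le> M * P" using M P N by (intro mult_mono) auto
  have MP0: "0 < N / 2 * Pm" using N P by simp
  have "2 * e\<^sup>2 / (M * P) \<le> 2 * e\<^sup>2 / (N / 2 * Pm)"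
    using MP MP0 by (intro divide_left_mono) auto
  also have "\<dots> \<le> 2 * (N * c) / (N / 2 * Pm)"
    using e3 MP0 by (intro divide_right_mono) auto
  also have "\<dots> = 4 * c / Pm"
    using N P by (simp add: field_simps)
  also have "4 * c / Pm = (8 * s\<^sup>2 + 8 * b\<^sup>2) / Pm" unfolding c_def by simp
  finally show ?thesis unfolding e_def b_def .
qed


lemma sqrt_bound_aux:
  fixes s Pm N :: real
  assumes "0 \<le> s" "0 < Pm" "4 * s\<^sup>2 / Pm\<^sup>2 \<le> N"
  shows "s * sqrt N \<le> N * Pm / 2"
proof -
  have N0: "0 \<le> N" by (rule order_trans[OF _ assms(3)]) simp
  have "4 * s\<^sup>2 \<le> N * Pm\<^sup>2" using assms(3) assms(2) by (simp add: pos_divide_le_eq)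
  moreover have "(sqrt N * Pm / 2)\<^sup>2 = N * Pm\<^sup>2 / 4" using N0 by (simp add: power_mult_distrib power_divide)
  ultimately have "s\<^sup>2 \<le> (sqrt N * Pm / 2)\<^sup>2" by simp
  then have "s \<le> sqrt N * Pm / 2"
    by (rule power2_le_imp_le) (use assms N0 in auto)
  then have "s * sqrt N \<le> sqrt N * Pm / 2 * sqrt N" using N0 by (intro mult_right_mono) auto
  also have "\<dots> = N * Pm / 2" using N0 by (simp add: field_simps)
  finally show ?thesis .
qed

lemma det_main:
  fixes \<theta>s \<theta> :: "('l::finite,'k::finite) param" and n :: "'l \<times> 'k \<Rightarrow> nat" and m :: "'k \<Rightarrow> nat"
    and N N' :: nat and t0 :: nat and nC K :: real
  defines "nC \<equiv> real CARD('l \<times> 'k)" and "K \<equiv> real CARD('k)"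
  assumes ths: "\<theta>s \<in> param_space" and th: "\<theta> \<in> param_space"
    and map: "prior \<theta>s * Lc n m \<theta>s \<le> prior \<theta> * Lc n m \<theta>"
    and bnd: "\<forall>\<theta>\<in>param_space. prior \<theta> * Lc (\<lambda>_. t0) (\<lambda>_. t0) \<theta> \<le> B"
    and pr: "0 < prior \<theta>s"
    and sn: "(\<Sum>c\<in>UNIV. n c) = N" and sm: "(\<Sum>j\<in>UNIV. m j) = N'"
    and devn: "\<forall>c. \<bar>real (n c) - N * PL \<theta>s c\<bar> < s * sqrt N"
    and devm: "\<forall>j. \<bar>real (m j) - N' * QU \<theta>s j\<bar> < s * sqrt N'"
    and s: "0 \<le> s"
    and Pm: "0 < Pm" "\<forall>c. Pm \<le> PL \<theta>s c" and Qm: "0 < Qm" "\<forall>j. Qm \<le> QU \<theta>s j"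
    and kap: "0 < \<kappa>" "\<kappa>\<^sup>2 / 4 < H1 \<theta> \<theta>s \<or> \<kappa>\<^sup>2 / 4 < H2 \<theta> \<theta>s"
    and N: "1 \<le> real N" "4 * s\<^sup>2 / Pm\<^sup>2 \<le> real N" "2 * t0 / Pm \<le> real N" "2 * nC * t0 \<le> real N"
    and N': "1 \<le> real N'" "4 * s\<^sup>2 / Qm\<^sup>2 \<le> real N'" "2 * t0 / Qm \<le> real N'" "2 * K * t0 \<le> real N'"
    and W: "16 * (nC * (8 * s\<^sup>2 + 8 * (nC * t0)\<^sup>2) / Pm + K * (8 * s\<^sup>2 + 8 * (K * t0)\<^sup>2) / Qm
              + ln B - ln (prior \<theta>s * Lc (\<lambda>_. t0) (\<lambda>_. t0) \<theta>s)) / \<kappa>\<^sup>2 < real N"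
    and W': "16 * (nC * (8 * s\<^sup>2 + 8 * (nC * t0)\<^sup>2) / Pm + K * (8 * s\<^sup>2 + 8 * (K * t0)\<^sup>2) / Qm
              + ln B - ln (prior \<theta>s * Lc (\<lambda>_. t0) (\<lambda>_. t0) \<theta>s)) / \<kappa>\<^sup>2 < real N'"
  shows False
proof -
  define R1 where "R1 = nC * (8 * s\<^sup>2 + 8 * (nC * t0)\<^sup>2) / Pm"
  define R2 where "R2 = K * (8 * s\<^sup>2 + 8 * (K * t0)\<^sup>2) / Qm"
  define A where "A = prior \<theta>s * Lc (\<lambda>_. t0) (\<lambda>_. t0) \<theta>s"
  have c1: "1 \<le> real CARD('l)" "1 \<le> real CARD('k)"
    using finite_UNIV_card_ge_0[where 'a='l] finite_UNIV_card_ge_0[where 'a='k] by auto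
  have nC1: "1 \<le> nC" unfolding nC_def using mult_mono[OF c1] by simp
  have K1: "1 \<le> K" unfolding K_def by (simp add: Suc_le_eq)
  have sN: "s * sqrt N \<le> N * Pm / 2" by (rule sqrt_bound_aux) (use s Pm N in auto)
  have sN': "s * sqrt N' \<le> N' * Qm / 2" by (rule sqrt_bound_aux) (use s Qm N' in auto)
  have nge: "t0 \<le> n c" for c
  proof -
    have "real N * Pm \<le> N * PL \<theta>s c" using Pm(2)[rule_format, of c] by (intro mult_left_mono) auto
    moreover have "2 * t0 \<le> N * Pm" using N(3) Pm by (simp add: divide_le_eq mult.commute)
    ultimately show ?thesis using devn[rule_format, of c] sN by linarith
  qed
  have mge: "t0 \<le> m j" for j
  proof -
    have "real N' * Qm \<le> N' * QU \<theta>s j" using Qm(2)[rule_format, of j] by (intro mult_left_mono) auto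
    moreover have "2 * t0 \<le> N' * Qm" using N'(3) Qm by (simp add: divide_le_eq mult.commute)
    ultimately show ?thesis using devm[rule_format, of j] sN' by linarith
  qed
  define n' where "n' c = n c - t0" for c
  define m' where "m' j = m j - t0" for j
  have nn: "n c = t0 + n' c" for c using nge[of c] by (simp add: n'_def)
  have mm: "m j = t0 + m' j" for j using mge[of j] by (simp add: m'_def)
  define M1 where "M1 = (\<Sum>c\<in>UNIV. real (n' c))"
  define M2 where "M2 = (\<Sum>j\<in>UNIV. real (m' j))"
  have M1eq: "M1 = N - nC * t0"
  proof -
    have "M1 = (\<Sum>c\<in>UNIV. real (n c) - real t0)" unfolding M1_def
      by (intro sum.cong refl) (simp add: nn)
    also have "\<dots> = N - nC * t0" using sn[symmetric] by (simp add: sum_subtractf nC_def)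
    finally show ?thesis .
  qed
  have M2eq: "M2 = N' - K * t0"
  proof -
    have "M2 = (\<Sum>j\<in>UNIV. real (m j) - real t0)" unfolding M2_def
      by (intro sum.cong refl) (simp add: mm)
    also have "\<dots> = N' - K * t0" using sm[symmetric] by (simp add: sum_subtractf K_def)
    finally show ?thesis .
  qed
  have M1N: "N / 2 \<le> M1" using M1eq N(4) by simp
  have M2N: "N' / 2 \<le> M2" using M2eq N'(4) by simp
  have M10: "0 < M1" using M1N N(1) by linarith
  have M20: "0 < M2" using M2N N'(1) by linarith
  have core: "ln A - ln B \<le>
     - (M1 / 2) * H1 \<theta> \<theta>s + (\<Sum>c\<in>UNIV. 2 * (real (n' c) - M1 * PL \<theta>s c)\<^sup>2 / (M1 * PL \<theta>s c))
     - (M2 / 2) * H2 \<theta> \<theta>s + (\<Sum>j\<in>UNIV. 2 * (real (m' j) - M2 * QU \<theta>s j)\<^sup>2 / (M2 * QU \<theta>s j))"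
    unfolding A_def
    by (rule det_core[OF ths th map _ pr nn mm M1_def M10 M2_def M20]) (use bnd th in auto)
  have S1: "(\<Sum>c\<in>UNIV. 2 * (real (n' c) - M1 * PL \<theta>s c)\<^sup>2 / (M1 * PL \<theta>s c)) \<le> R1"
  proof -
    have "(\<Sum>c\<in>UNIV. 2 * (real (n' c) - M1 * PL \<theta>s c)\<^sup>2 / (M1 * PL \<theta>s c))
       \<le> (\<Sum>c\<in>(UNIV::('l\<times>'k) set). (8 * s\<^sup>2 + 8 * (nC * t0)\<^sup>2) / Pm)"
    proof (intro sum_mono)
      fix c
      have "real (n' c) = real (n c) - real t0" by (simp add: nn)
      moreover have "2 * (real (n c) - real t0 - M1 * PL \<theta>s c)\<^sup>2 / (M1 * PL \<theta>s c)
            \<le> (8 * s\<^sup>2 + 8 * (nC * t0)\<^sup>2) / Pm"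
        by (rule term_bound[OF M1eq M1N N(1) Pm(1) _ _ nC1 _ s])
           (use Pm(2)[rule_format, of c] PL_le1[OF ths, of c] devn[rule_format, of c] in \<open>auto simp: less_imp_le\<close>)
      ultimately show "2 * (real (n' c) - M1 * PL \<theta>s c)\<^sup>2 / (M1 * PL \<theta>s c) \<le> (8 * s\<^sup>2 + 8 * (nC * t0)\<^sup>2) / Pm"
        by simp
    qed
    also have "\<dots> = R1" unfolding R1_def nC_def by simp
    finally show ?thesis .
  qed
  have S2: "(\<Sum>j\<in>UNIV. 2 * (real (m' j) - M2 * QU \<theta>s j)\<^sup>2 / (M2 * QU \<theta>s j)) \<le> R2"
  proof -
    have "(\<Sum>j\<in>UNIV. 2 * (real (m' j) - M2 * QU \<theta>s j)\<^sup>2 / (M2 * QU \<theta>s j))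
       \<le> (\<Sum>j\<in>(UNIV::'k set). (8 * s\<^sup>2 + 8 * (K * t0)\<^sup>2) / Qm)"
    proof (intro sum_mono)
      fix j
      have "real (m' j) = real (m j) - real t0" by (simp add: mm)
      moreover have "2 * (real (m j) - real t0 - M2 * QU \<theta>s j)\<^sup>2 / (M2 * QU \<theta>s j)
            \<le> (8 * s\<^sup>2 + 8 * (K * t0)\<^sup>2) / Qm"
        by (rule term_bound[OF M2eq M2N N'(1) Qm(1) _ _ K1 _ s])
           (use Qm(2)[rule_format, of j] QU_le1[OF ths, of j] devm[rule_format, of j] in \<open>auto simp: less_imp_le\<close>)
      ultimately show "2 * (real (m' j) - M2 * QU \<theta>s j)\<^sup>2 / (M2 * QU \<theta>s j) \<le> (8 * s\<^sup>2 + 8 * (K * t0)\<^sup>2) / Qm"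
        by simp
    qed
    also have "\<dots> = R2" unfolding R2_def K_def by simp
    finally show ?thesis .
  qed
  have H0: "0 \<le> H1 \<theta> \<theta>s" "0 \<le> H2 \<theta> \<theta>s" by (rule H_nonneg)+
  have h1: "N / 2 / 2 * H1 \<theta> \<theta>s \<le> M1 / 2 * H1 \<theta> \<theta>s" using M1N H0 by (intro mult_right_mono) auto
  have h2: "N' / 2 / 2 * H2 \<theta> \<theta>s \<le> M2 / 2 * H2 \<theta> \<theta>s" using M2N H0 by (intro mult_right_mono) auto
  have k2: "0 < \<kappa>\<^sup>2" using kap by simp
  have WN: "16 * (R1 + R2 + ln B - ln A) < N * \<kappa>\<^sup>2" using W k2 unfolding R1_def R2_def A_def
    by (simp add: pos_divide_less_eq)
  have WN': "16 * (R1 + R2 + ln B - ln A) < N' * \<kappa>\<^sup>2" using W' k2 unfolding R1_def R2_def A_def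
    by (simp add: pos_divide_less_eq)
  have q: "N / 2 / 2 * (\<kappa>\<^sup>2 / 4) = N * \<kappa>\<^sup>2 / 16" "N' / 2 / 2 * (\<kappa>\<^sup>2 / 4) = N' * \<kappa>\<^sup>2 / 16"
    by simp_all
  have q2: "- (M1 / 2) * H1 \<theta> \<theta>s = - (M1 / 2 * H1 \<theta> \<theta>s)" "- (M2 / 2) * H2 \<theta> \<theta>s = - (M2 / 2 * H2 \<theta> \<theta>s)"
    by simp_all
  have base: "ln A - ln B \<le> - (M1 / 2 * H1 \<theta> \<theta>s) - (M2 / 2 * H2 \<theta> \<theta>s) + R1 + R2"
    using core S1 S2 unfolding q2 by linarith
  have h1': "0 \<le> N / 2 / 2 * H1 \<theta> \<theta>s" "0 \<le> N' / 2 / 2 * H2 \<theta> \<theta>s" using H0 by simp_all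
  have WN1: "R1 + R2 + ln B - ln A < N * \<kappa>\<^sup>2 / 16" using WN by simp
  have WN2: "R1 + R2 + ln B - ln A < N' * \<kappa>\<^sup>2 / 16" using WN' by simp
  from kap(2) show False
  proof
    assume "\<kappa>\<^sup>2 / 4 < H1 \<theta> \<theta>s"
    then have "N * \<kappa>\<^sup>2 / 16 \<le> N / 2 / 2 * H1 \<theta> \<theta>s" unfolding q(1)[symmetric] using N(1) by (intro mult_left_mono) auto
    then have "N * \<kappa>\<^sup>2 / 16 \<le> M1 / 2 * H1 \<theta> \<theta>s" using h1 by linarith
    moreover have "0 \<le> M2 / 2 * H2 \<theta> \<theta>s" using h2 h1' by linarith
    ultimately show False using base WN1 by linarith
  next
    assume "\<kappa>\<^sup>2 / 4 < H2 \<theta> \<theta>s"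
    then have "N' * \<kappa>\<^sup>2 / 16 \<le> N' / 2 / 2 * H2 \<theta> \<theta>s" unfolding q(2)[symmetric] using N'(1) by (intro mult_left_mono) auto
    then have "N' * \<kappa>\<^sup>2 / 16 \<le> M2 / 2 * H2 \<theta> \<theta>s" using h2 by linarith
    moreover have "0 \<le> M1 / 2 * H1 \<theta> \<theta>s" using h1 h1' by linarith
    ultimately show False using base WN2 by linarith
  qed
qed


lemma exp_bound_aux:
  fixes s a :: real
  assumes "0 < s"
  shows "exp (-2 * s\<^sup>2) \<le> 1 / (2 * s\<^sup>2)"
proof -
  have "2 * s\<^sup>2 \<le> exp (2 * s\<^sup>2)" using exp_ge_add_one_self[of "2 * s\<^sup>2"] by linarith
  moreover have "0 < 2 * s\<^sup>2" using assms by simp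
  ultimately have "1 / exp (2 * s\<^sup>2) \<le> 1 / (2 * s\<^sup>2)" by (intro divide_left_mono) auto
  then show ?thesis by (simp add: exp_minus field_simps)
qed

theorem mainTheorem1:
  fixes \<pi>s \<pi>s' :: "real^'l::finite" and \<phi>s :: "real^'k::finite^'l"
    and prior :: "('l, 'k) param \<Rightarrow> real"
  assumes "\<pi>s \<in> open_simplex" and "\<pi>s' \<in> open_simplex"
    and "\<forall>l. \<phi>s$l \<in> open_simplex"
    and "rank (transpose \<phi>s) = CARD('l)"
    and "continuous_on param_space prior"
    and "\<forall>\<theta>\<in>param_space. prior \<theta> > 0"
  shows "\<forall>\<delta>>0. \<forall>\<epsilon>>0. \<exists>N0 N0'. \<forall>N\<ge>N0. \<forall>N'\<ge>N0'.
           measure_pmf.prob (data_pmf N N' (\<pi>s, \<pi>s', \<phi>s))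
             {(yc, c'). \<forall>\<theta>. is_MAP prior N N' yc c' \<theta> \<longrightarrow> dist \<theta> (\<pi>s, \<pi>s', \<phi>s) < \<epsilon>}
           \<ge> 1 - \<delta>"
proof (intro allI impI)
  fix \<delta> \<epsilon> :: real
  assume \<delta>: "\<delta> > 0" and \<epsilon>: "\<epsilon> > 0"
  define \<theta>s where "\<theta>s = (\<pi>s, \<pi>s', \<phi>s)"
  have ths: "\<theta>s \<in> param_space" using assms(1-3) by (simp add: param_space_def \<theta>s_def)
  have prpos: "\<And>\<theta>. \<theta> \<in> param_space \<Longrightarrow> 0 < prior \<theta>" using assms(6) by auto
  define pm where "pm = Min (range (\<lambda>l. \<pi>s$l))"
  have pm0: "0 < pm" unfolding pm_def using simplex_pos[OF assms(1)] by (simp add: Min_gr_iff)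
  have pml: "\<And>l. pm \<le> \<pi>s$l" unfolding pm_def by (rule Min_le) auto
  have inj: "inj ((*v) (transpose \<phi>s))" using assms(4) full_rank_injective by blast
  obtain \<beta> where \<beta>: "\<beta> > 0" "\<And>v. \<beta> * norm v \<le> norm (transpose \<phi>s *v v)"
    using linear_inj_bounded_below_pos[OF matrix_vector_mul_linear inj] by blast
  define Ct where "Ct = real CARD('l) * real CARD('k)
     + real CARD('k) * (1 + real CARD('l) * (2 * (1 + real CARD('k)) / pm)) / \<beta>
     + real CARD('l) * (real CARD('k) * (2 * (1 + real CARD('k)) / pm))"
  have c1: "1 \<le> real CARD('l)" "1 \<le> real CARD('k)"
    using finite_UNIV_card_ge_0[where 'a='l] finite_UNIV_card_ge_0[where 'a='k] by auto
  have Ct0: "0 < Ct"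
  proof -
    have "0 < real CARD('l) * real CARD('k)" using c1 by simp
    moreover have "0 \<le> real CARD('k) * (1 + real CARD('l) * (2 * (1 + real CARD('k)) / pm)) / \<beta>"
      using pm0 \<beta> by simp
    moreover have "0 \<le> real CARD('l) * (real CARD('k) * (2 * (1 + real CARD('k)) / pm))"
      using pm0 by simp
    ultimately show ?thesis unfolding Ct_def by linarith
  qed
  define \<kappa> where "\<kappa> = min (pm / (2 * real CARD('k))) (\<epsilon> / (2 * Ct))"
  have \<kappa>0: "0 < \<kappa>" unfolding \<kappa>_def using pm0 c1 \<epsilon> Ct0 by simp
  have \<kappa>K: "real CARD('k) * \<kappa> \<le> pm / 2"
  proof -
    have "\<kappa> \<le> pm / (2 * real CARD('k))" unfolding \<kappa>_def by simp
    then show ?thesis using c1 by (simp add: field_simps)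
  qed
  have \<kappa>C: "\<kappa> * Ct < \<epsilon>"
  proof -
    have "\<kappa> \<le> \<epsilon> / (2 * Ct)" unfolding \<kappa>_def by simp
    then have "\<kappa> * Ct \<le> \<epsilon> / (2 * Ct) * Ct" using Ct0 by (intro mult_right_mono) auto
    also have "\<dots> = \<epsilon> / 2" using Ct0 by simp
    finally show ?thesis using \<epsilon> by linarith
  qed
  have far: "\<kappa>\<^sup>2 / 4 < H1 \<theta> \<theta>s \<or> \<kappa>\<^sup>2 / 4 < H2 \<theta> \<theta>s"
    if th: "\<theta> \<in> param_space" and d: "\<epsilon> \<le> dist \<theta> \<theta>s" for \<theta>
  proof (rule ccontr)
    assume "\<not> (\<kappa>\<^sup>2 / 4 < H1 \<theta> \<theta>s \<or> \<kappa>\<^sup>2 / 4 < H2 \<theta> \<theta>s)"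
    then have h: "H1 \<theta> \<theta>s \<le> \<kappa>\<^sup>2 / 4" "H2 \<theta> \<theta>s \<le> \<kappa>\<^sup>2 / 4" by auto
    have hP: "\<bar>PL \<theta> c - PL (\<pi>s, \<pi>s', \<phi>s) c\<bar> \<le> \<kappa>" for c
    proof -
      have "(PL \<theta> c - PL \<theta>s c)\<^sup>2 / 4 \<le> \<kappa>\<^sup>2 / 4" using H1_lower[OF th ths, of c] h by linarith
      then have "\<bar>PL \<theta> c - PL \<theta>s c\<bar>\<^sup>2 \<le> \<kappa>\<^sup>2" by simp
      then show ?thesis unfolding \<theta>s_def by (rule power2_le_imp_le) (use \<kappa>0 in auto)
    qed
    have hQ: "\<bar>QU \<theta> j - QU (\<pi>s, \<pi>s', \<phi>s) j\<bar> \<le> \<kappa>" for j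
    proof -
      have "(QU \<theta> j - QU \<theta>s j)\<^sup>2 / 4 \<le> \<kappa>\<^sup>2 / 4" using H2_lower[OF th ths, of j] h by linarith
      then have "\<bar>QU \<theta> j - QU \<theta>s j\<bar>\<^sup>2 \<le> \<kappa>\<^sup>2" by simp
      then show ?thesis unfolding \<theta>s_def by (rule power2_le_imp_le) (use \<kappa>0 in auto)
    qed
    have "dist \<theta> (\<pi>s, \<pi>s', \<phi>s) \<le> \<kappa> * Ct" unfolding Ct_def
      by (rule ident_kappa[OF ths[unfolded \<theta>s_def] th pm0 pml \<beta> _ \<kappa>K hP hQ]) (use \<kappa>0 in simp)
    then show False using d \<kappa>C unfolding \<theta>s_def by linarith
  qed
  show "\<exists>N0 N0'. \<forall>N\<ge>N0. \<forall>N'\<ge>N0'.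
           measure_pmf.prob (data_pmf N N' (\<pi>s, \<pi>s', \<phi>s))
             {(yc, c'). \<forall>\<theta>. is_MAP prior N N' yc c' \<theta> \<longrightarrow> dist \<theta> (\<pi>s, \<pi>s', \<phi>s) < \<epsilon>}
           \<ge> 1 - \<delta>"
  proof (cases "\<exists>t0 B. \<forall>\<theta>\<in>param_space. prior \<theta> * Lc (\<lambda>_. t0) (\<lambda>_. t0) \<theta> \<le> B")
    case False
    have noMAP: "\<not> is_MAP prior N N' yc c' \<theta>" for N N' and yc :: "nat \<Rightarrow> 'l \<times> 'k" and c' :: "nat \<Rightarrow> 'k" and \<theta>
    proof
      assume M: "is_MAP prior N N' yc c' \<theta>"
      then have th: "\<theta> \<in> param_space"
        and mx: "\<forall>\<theta>'\<in>param_space. prior \<theta>' * likelihood N N' yc c' \<theta>' \<le> prior \<theta> * likelihood N N' yc c' \<theta>"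
        unfolding is_MAP_def by auto
      have "\<forall>\<theta>'\<in>param_space. prior \<theta>' * Lc (\<lambda>_. max N N') (\<lambda>_. max N N') \<theta>' \<le> prior \<theta> * likelihood N N' yc c' \<theta>"
      proof
        fix \<theta>' :: "('l,'k) param" assume th': "\<theta>' \<in> param_space"
        have "Lc (\<lambda>_. max N N') (\<lambda>_. max N N') \<theta>' \<le> Lc (cntL N yc) (cntL N' c') \<theta>'"
          by (rule Lc_anti[OF th']) (auto intro: le_trans[OF cntL_le])
        then have "prior \<theta>' * Lc (\<lambda>_. max N N') (\<lambda>_. max N N') \<theta>' \<le> prior \<theta>' * likelihood N N' yc c' \<theta>'"
          unfolding likelihood_Lc using prpos[OF th'] by (intro mult_left_mono) auto
        then show "prior \<theta>' * Lc (\<lambda>_. max N N') (\<lambda>_. max N N') \<theta>' \<le> prior \<theta> * likelihood N N' yc c' \<theta>"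
          using mx th' by (meson order_trans)
      qed
      then show False using False by blast
    qed
    have "measure_pmf.prob (data_pmf N N' (\<pi>s, \<pi>s', \<phi>s))
             {(yc, c'). \<forall>\<theta>. is_MAP prior N N' yc c' \<theta> \<longrightarrow> dist \<theta> (\<pi>s, \<pi>s', \<phi>s) < \<epsilon>} = 1" for N N'
    proof -
      have "{(yc, c'). \<forall>\<theta>. is_MAP prior N N' yc c' \<theta> \<longrightarrow> dist \<theta> (\<pi>s, \<pi>s', \<phi>s) < \<epsilon>} = UNIV"
        using noMAP by auto
      then show ?thesis by simp
    qed
    then show ?thesis using \<delta> by auto
  next
    case True
    then obtain t0 B where bnd: "\<forall>\<theta>\<in>param_space. prior \<theta> * Lc (\<lambda>_. t0) (\<lambda>_. t0) \<theta> \<le> B" by blast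
    define A where "A = prior \<theta>s * Lc (\<lambda>_. t0) (\<lambda>_. t0) \<theta>s"
    define P1 where "P1 = joint_pmf \<pi>s \<phi>s"
    define P2 where "P2 = map_pmf snd (joint_pmf \<pi>s' \<phi>s)"
    have pP: "pmf P1 c = PL \<theta>s c" for c
      using pmf_joint[OF assms(1) assms(3), of "fst c" "snd c"] unfolding P1_def
      by (simp add: PL_def \<theta>s_def)
    have pQ: "pmf P2 j = QU \<theta>s j" for j
      using pmf_marg[OF assms(2) assms(3), of j] unfolding P2_def
      by (simp add: QU_def \<theta>s_def)
    define Pm where "Pm = Min (range (PL \<theta>s))"
    have Pm0: "0 < Pm" unfolding Pm_def using PL_pos[OF ths] by (simp add: Min_gr_iff)
    have Pml: "\<forall>c. Pm \<le> PL \<theta>s c" unfolding Pm_def by (auto intro: Min_le)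
    define Qm where "Qm = Min (range (QU \<theta>s))"
    have Qm0: "0 < Qm" unfolding Qm_def using QU_pos[OF ths] by (simp add: Min_gr_iff)
    have Qml: "\<forall>j. Qm \<le> QU \<theta>s j" unfolding Qm_def by (auto intro: Min_le)
    define nC :: real where "nC = real CARD('l \<times> 'k)"
    define K :: real where "K = real CARD('k)"
    have nCK: "0 < nC + K" unfolding nC_def K_def by (simp add: add_pos_pos)
    define s where "s = sqrt ((nC + K) / \<delta>)"
    have s0: "0 < s" unfolding s_def using nCK \<delta> by simp
    have s2: "s\<^sup>2 = (nC + K) / \<delta>" unfolding s_def using nCK \<delta> by simp
    define Wv where "Wv = 16 * (nC * (8 * s\<^sup>2 + 8 * (nC * t0)\<^sup>2) / Pm + K * (8 * s\<^sup>2 + 8 * (K * t0)\<^sup>2) / Qm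
              + ln B - ln A) / \<kappa>\<^sup>2"
    define X where "X = 1 + 4 * s\<^sup>2 / Pm\<^sup>2 + 2 * t0 / Pm + 2 * nC * t0 + 4 * s\<^sup>2 / Qm\<^sup>2 + 2 * t0 / Qm
       + 2 * K * t0 + \<bar>Wv\<bar>"
    have Xge: "1 \<le> X" "4 * s\<^sup>2 / Pm\<^sup>2 \<le> X" "2 * t0 / Pm \<le> X" "2 * nC * t0 \<le> X"
       "4 * s\<^sup>2 / Qm\<^sup>2 \<le> X" "2 * t0 / Qm \<le> X" "2 * K * t0 \<le> X" "Wv < X"
    proof -
      have nn: "0 \<le> 4 * s\<^sup>2 / Pm\<^sup>2" "0 \<le> 2 * t0 / Pm" "0 \<le> 2 * nC * t0" "0 \<le> 4 * s\<^sup>2 / Qm\<^sup>2"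
        "0 \<le> 2 * t0 / Qm" "0 \<le> 2 * K * t0" "Wv \<le> \<bar>Wv\<bar>"
        using Pm0 Qm0 by (auto simp: nC_def K_def)
      show "1 \<le> X" "4 * s\<^sup>2 / Pm\<^sup>2 \<le> X" "2 * t0 / Pm \<le> X" "2 * nC * t0 \<le> X"
       "4 * s\<^sup>2 / Qm\<^sup>2 \<le> X" "2 * t0 / Qm \<le> X" "2 * K * t0 \<le> X" "Wv < X"
        unfolding X_def using nn by linarith+
    qed
    show ?thesis
    proof (intro exI allI impI)
      fix N N' :: nat
      assume NN: "nat \<lceil>X\<rceil> \<le> N" and NN': "nat \<lceil>X\<rceil> \<le> N'"
      have RN: "X \<le> real N" using NN Xge(1) by linarith
      have RN': "X \<le> real N'" using NN' Xge(1) by linarith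
      have N0: "0 < N" using RN Xge(1) by simp
      have N0': "0 < N'" using RN' Xge(1) by simp
      define G where "G = {x :: (nat \<Rightarrow> 'l \<times> 'k) \<times> (nat \<Rightarrow> 'k).
         (\<forall>c. \<bar>real (cntL N (fst x) c) - N * pmf P1 c\<bar> < s * sqrt N) \<and>
         (\<forall>k. \<bar>real (cntL N' (snd x) k) - N' * pmf P2 k\<bar> < s * sqrt N')}"
      have dp: "data_pmf N N' (\<pi>s, \<pi>s', \<phi>s) = pair_pmf (Pi_pmf {..<N} undefined (\<lambda>_. P1)) (Pi_pmf {..<N'} undefined (\<lambda>_. P2))"
        by (simp add: data_pmf_def P1_def P2_def)
      have pg: "measure_pmf.prob (data_pmf N N' (\<pi>s, \<pi>s', \<phi>s)) G \<ge> 1 - 2 * (CARD('l \<times> 'k) + CARD('k)) * exp (-2 * s\<^sup>2)"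
        unfolding dp G_def by (rule prob_good) (use N0 N0' s0 in auto)
      have eb: "2 * (CARD('l \<times> 'k) + CARD('k)) * exp (-2 * s\<^sup>2) \<le> \<delta>"
      proof -
        have "2 * (CARD('l \<times> 'k) + CARD('k)) * exp (-2 * s\<^sup>2) = 2 * (nC + K) * exp (-2 * s\<^sup>2)"
          unfolding nC_def K_def by simp
        also have "\<dots> \<le> 2 * (nC + K) * (1 / (2 * s\<^sup>2))"
          using nCK exp_bound_aux[OF s0] by (intro mult_left_mono) auto
        also have "\<dots> = \<delta>" unfolding s2 using nCK \<delta> by (simp add: field_simps)
        finally show ?thesis .
      qed
      have sub: "G \<subseteq> {(yc, c'). \<forall>\<theta>. is_MAP prior N N' yc c' \<theta> \<longrightarrow> dist \<theta> (\<pi>s, \<pi>s', \<phi>s) < \<epsilon>}"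
      proof (clarsimp)
        fix yc c' \<theta>
        assume g: "(yc, c') \<in> G" and M: "is_MAP prior N N' yc c' \<theta>"
        show "dist \<theta> (\<pi>s, \<pi>s', \<phi>s) < \<epsilon>"
        proof (rule ccontr)
          assume "\<not> dist \<theta> (\<pi>s, \<pi>s', \<phi>s) < \<epsilon>"
          then have d: "\<epsilon> \<le> dist \<theta> \<theta>s" unfolding \<theta>s_def by simp
          have th: "\<theta> \<in> param_space" using M unfolding is_MAP_def by auto
          have map: "prior \<theta>s * Lc (cntL N yc) (cntL N' c') \<theta>s \<le> prior \<theta> * Lc (cntL N yc) (cntL N' c') \<theta>"
            using M ths unfolding is_MAP_def likelihood_Lc by auto
          have devn: "\<forall>c. \<bar>real (cntL N yc c) - N * PL \<theta>s c\<bar> < s * sqrt N"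
            using g unfolding G_def by (simp add: pP)
          have devm: "\<forall>j. \<bar>real (cntL N' c' j) - N' * QU \<theta>s j\<bar> < s * sqrt N'"
            using g unfolding G_def by (simp add: pQ)
          show False
            by (rule det_main[OF ths th map bnd prpos[OF ths] sum_cntL sum_cntL devn devm
                  less_imp_le[OF s0] Pm0 Pml Qm0 Qml \<kappa>0 far[OF th d]])
               (use RN RN' Xge in \<open>simp_all add: nC_def K_def Wv_def A_def\<close>)
        qed
      qed
      have "measure_pmf.prob (data_pmf N N' (\<pi>s, \<pi>s', \<phi>s)) G \<le>
            measure_pmf.prob (data_pmf N N' (\<pi>s, \<pi>s', \<phi>s))
             {(yc, c'). \<forall>\<theta>. is_MAP prior N N' yc c' \<theta> \<longrightarrow> dist \<theta> (\<pi>s, \<pi>s', \<phi>s) < \<epsilon>}"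
        by (rule measure_pmf.finite_measure_mono[OF sub]) simp
      then show "1 - \<delta> \<le> measure_pmf.prob (data_pmf N N' (\<pi>s, \<pi>s', \<phi>s))
             {(yc, c'). \<forall>\<theta>. is_MAP prior N N' yc c' \<theta> \<longrightarrow> dist \<theta> (\<pi>s, \<pi>s', \<phi>s) < \<epsilon>}"
        using pg eb by linarith
    qed
  qed
qed


end
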